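(* Let $\mathbb{K}$ be a field, $A$ a $\mathbb{K}$-algebra, $\beta_1\in A$ arbitrary, and $\beta_0\in A$ nilpotent of degree $2$. Then the set $$\{\beta_1^j: j\ge0\}\cup\{\beta_1^j\beta_0: j\ge0\}\cup\{\beta_1^j\beta_0\beta_1: j\ge0\}\cup\{\beta_1^j\beta_0\beta_1\beta_0: j\ge0\}$$ is linearly independent over $\mathbb{K}$ if and only if the set $$\{\beta_1^j\beta_0: j\ge0\}\cup\{\beta_1^j\beta_0\beta_1\beta_0: j\ge0\}$$ is linearly independent over $\mathbb{K}$.
   Context: "Nilpotent of degree $2$" means $\beta_0^2=0$ (and $\beta_0\neq 0$). *)

theory Defs
  imports Complex_Main
begin

definition is_algebra :: "('k::field \<Rightarrow> 'a::ring_1 \<Rightarrow> 'a) \<Rightarrow> bool" where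
  "is_algebra scale \<longleftrightarrow> vector_space scale \<and>
     (\<forall>c x y. scale c (x * y) = scale c x * y) \<and>
     (\<forall>c x y. scale c (x * y) = x * scale c y)"

definition lin_indep_family :: "('k::field \<Rightarrow> 'a::ab_group_add \<Rightarrow> 'a) \<Rightarrow> ('i \<Rightarrow> 'a) \<Rightarrow> 'i set \<Rightarrow> bool" where
  "lin_indep_family scale f I \<longleftrightarrow> inj_on f I \<and> \<not> module.dependent scale (f ` I)"

definition tail_word :: "'a::ring_1 \<Rightarrow> 'a \<Rightarrow> nat \<Rightarrow> 'a" where
  "tail_word b0 b1 k = (if k = 0 then 1 else if k = 1 then b0 else if k = 2 then b0 * b1
                        else b0 * b1 * b0)"

end

theory Submission
  imports Defs
begin

lemma family_indep_iff:
  fixes scale :: "'k::field \<Rightarrow> 'a::ab_group_add \<Rightarrow> 'a"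
  assumes M: "module scale"
  shows "lin_indep_family scale f I \<longleftrightarrow>
    (\<forall>S c. finite S \<longrightarrow> S \<subseteq> I \<longrightarrow> (\<Sum>i\<in>S. scale (c i) (f i)) = 0 \<longrightarrow> (\<forall>i\<in>S. c i = 0))"
proof
  assume L: "lin_indep_family scale f I"
  then have inj: "inj_on f I" and ind: "\<not> module.dependent scale (f ` I)"
    unfolding lin_indep_family_def by auto
  show "\<forall>S c. finite S \<longrightarrow> S \<subseteq> I \<longrightarrow> (\<Sum>i\<in>S. scale (c i) (f i)) = 0 \<longrightarrow> (\<forall>i\<in>S. c i = 0)"
  proof (intro allI impI ballI)
    fix S c i assume S: "finite S" "S \<subseteq> I" and s0: "(\<Sum>i\<in>S. scale (c i) (f i)) = 0" and i: "i \<in> S"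
    have injS: "inj_on f S" using inj S(2) inj_on_subset by blast
    define u where "u v = c (inv_into S f v)" for v
    have "(\<Sum>v\<in>f ` S. scale (u v) v) = (\<Sum>i\<in>S. scale (u (f i)) (f i))"
      using sum.reindex[OF injS] by simp
    also have "\<dots> = (\<Sum>i\<in>S. scale (c i) (f i))"
      using injS by (intro sum.cong) (auto simp: u_def)
    finally have "(\<Sum>v\<in>f ` S. scale (u v) v) = 0" using s0 by simp
    then have "u (f i) = 0"
      using module.independentD[OF M ind, of "f ` S" u "f i"] S i by auto
    then show "c i = 0" using injS i by (simp add: u_def)
  qed
next
  assume R: "\<forall>S c. finite S \<longrightarrow> S \<subseteq> I \<longrightarrow> (\<Sum>i\<in>S. scale (c i) (f i)) = 0 \<longrightarrow> (\<forall>i\<in>S. c i = 0)"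
  have inj: "inj_on f I"
  proof (rule inj_onI, rule ccontr)
    fix i j assume ij: "i \<in> I" "j \<in> I" "f i = f j" "i \<noteq> j"
    define c where "c x = (if x = i then 1 else - 1 :: 'k)" for x
    have "(\<Sum>x\<in>{i,j}. scale (c x) (f x)) = scale 1 (f i) + scale (-1) (f j)"
      using ij by (simp add: c_def)
    also have "\<dots> = 0" using ij by (simp add: module.scale_one[OF M] module.scale_minus_left[OF M])
    finally have s: "(\<Sum>x\<in>{i,j}. scale (c x) (f x)) = 0" .
    have fin: "finite {i,j}" by simp
    have sub: "{i,j} \<subseteq> I" using ij by simp
    have "\<forall>x\<in>{i,j}. c x = 0" using R fin sub s by blast
    then have "c i = 0" by simp
    then show False by (simp add: c_def)
  qed
  have "\<not> module.dependent scale (f ` I)"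
    unfolding module.independent_explicit_module[OF M]
  proof (intro allI impI)
    fix t u v assume t: "finite t" "t \<subseteq> f ` I" and s0: "(\<Sum>v\<in>t. scale (u v) v) = 0" and v: "v \<in> t"
    define S where "S = inv_into I f ` t"
    have fS: "f ` S = t"
    proof -
      have "f ` S = (\<lambda>v. f (inv_into I f v)) ` t" unfolding S_def by (simp add: image_image)
      also have "\<dots> = (\<lambda>v. v) ` t"
      proof (rule image_cong)
        fix v assume "v \<in> t"
        then have "v \<in> f ` I" using t(2) by blast
        then show "f (inv_into I f v) = v" by (rule f_inv_into_f)
      qed simp
      finally show ?thesis by simp
    qed
    have SI: "S \<subseteq> I" unfolding S_def using t(2) by (auto intro: inv_into_into)
    have injS: "inj_on f S" using inj SI inj_on_subset by blast
    have "(\<Sum>i\<in>S. scale (u (f i)) (f i)) = (\<Sum>v\<in>f ` S. scale (u v) v)"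
      by (rule sum.reindex[OF injS, symmetric, unfolded comp_def])
    then have "(\<Sum>i\<in>S. scale (u (f i)) (f i)) = 0" using fS s0 by simp
    moreover have "finite S" unfolding S_def using t by simp
    moreover have "inv_into I f v \<in> S" using v unfolding S_def by simp
    ultimately have "u (f (inv_into I f v)) = 0" using R[rule_format, of S "\<lambda>i. u (f i)", OF _ SI] by blast
    then show "u v = 0" using t v by (auto simp: f_inv_into_f)
  qed
  then show "lin_indep_family scale f I" using inj unfolding lin_indep_family_def by simp
qed

theorem proposition1:
  fixes scale :: "'k::field \<Rightarrow> 'a::ring_1 \<Rightarrow> 'a"
    and b0 b1 :: 'a
  assumes "is_algebra scale"
    and "b0 ^ 2 = 0" and "b0 \<noteq> 0"
  shows "lin_indep_family scale (\<lambda>(j, k). b1 ^ j * tail_word b0 b1 k) {(j, k). k < 4}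
     \<longleftrightarrow> lin_indep_family scale (\<lambda>(j, k). b1 ^ j * tail_word b0 b1 k) {(j, k). k = 1 \<or> k = 3}"
proof -
  define f where "f = (\<lambda>(j, k). b1 ^ j * tail_word b0 b1 (k::nat))"
  define I where "I = {(j::nat, k::nat). k < 4}"
  define I' where "I' = {(j::nat, k::nat). k = 1 \<or> k = 3}"
  have VS: "vector_space scale" and SL: "\<And>c x y. scale c (x * y) = scale c x * y"
    using assms(1) unfolding is_algebra_def by auto
  have M: "module scale" using VS by (simp add: module_iff_vector_space)
  have bb: "b0 * b0 = 0" using assms(2) by (simp add: power2_eq_square)
  have fb: "f (j, k) * b0 = (if k = 0 then f (j, 1) else if k = 2 then f (j, 3) else 0)"
    if "k < 4" for j k
  proof -
    have "k = 0 \<or> k = 1 \<or> k = 2 \<or> k = 3" using that by auto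
    then show ?thesis
      by (auto simp: f_def tail_word_def mult.assoc bb)
  qed
  have "(\<forall>S c. finite S \<longrightarrow> S \<subseteq> I \<longrightarrow> (\<Sum>i\<in>S. scale (c i) (f i)) = 0 \<longrightarrow> (\<forall>i\<in>S. c i = 0))
      \<longleftrightarrow> (\<forall>S c. finite S \<longrightarrow> S \<subseteq> I' \<longrightarrow> (\<Sum>i\<in>S. scale (c i) (f i)) = 0 \<longrightarrow> (\<forall>i\<in>S. c i = 0))"
  proof
    assume "\<forall>S c. finite S \<longrightarrow> S \<subseteq> I \<longrightarrow> (\<Sum>i\<in>S. scale (c i) (f i)) = 0 \<longrightarrow> (\<forall>i\<in>S. c i = 0)"
    moreover have "I' \<subseteq> I" unfolding I_def I'_def by auto
    ultimately show "\<forall>S c. finite S \<longrightarrow> S \<subseteq> I' \<longrightarrow> (\<Sum>i\<in>S. scale (c i) (f i)) = 0 \<longrightarrow> (\<forall>i\<in>S. c i = 0)"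
      by blast
  next
    assume H: "\<forall>S c. finite S \<longrightarrow> S \<subseteq> I' \<longrightarrow> (\<Sum>i\<in>S. scale (c i) (f i)) = 0 \<longrightarrow> (\<forall>i\<in>S. c i = 0)"
    show "\<forall>S c. finite S \<longrightarrow> S \<subseteq> I \<longrightarrow> (\<Sum>i\<in>S. scale (c i) (f i)) = 0 \<longrightarrow> (\<forall>i\<in>S. c i = 0)"
    proof (intro allI impI)
      fix S c assume S: "finite S" "S \<subseteq> I" and s0: "(\<Sum>i\<in>S. scale (c i) (f i)) = 0"
      define E where "E = S \<inter> {(j, k). k = 0 \<or> k = 2}"
      define sh where "sh = (\<lambda>(j::nat, k::nat). (j, k + 1))"
      define ush where "ush = (\<lambda>(j::nat, k::nat). (j, k - 1))"
      have injsh: "inj_on sh E" unfolding sh_def by (auto simp: inj_on_def)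
      have "0 = (\<Sum>i\<in>S. scale (c i) (f i)) * b0" using s0 by simp
      also have "\<dots> = (\<Sum>i\<in>S. scale (c i) (f i * b0))"
        by (simp add: sum_distrib_right SL)
      also have "\<dots> = (\<Sum>i\<in>E. scale (c i) (f i * b0))"
      proof (rule sum.mono_neutral_right)
        show "finite S" using S by simp
        show "E \<subseteq> S" unfolding E_def by auto
        show "\<forall>i\<in>S - E. scale (c i) (f i * b0) = 0"
        proof
          fix i assume i: "i \<in> S - E"
          obtain j k where ijk: "i = (j, k)" by (cases i)
          have "k < 4" "k \<noteq> 0" "k \<noteq> 2" using i S(2) unfolding ijk E_def I_def by auto
          then have "f i * b0 = 0" unfolding ijk using fb by simp
          then show "scale (c i) (f i * b0) = 0" using M by (simp add: module.scale_zero_right)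
        qed
      qed
      also have "\<dots> = (\<Sum>i\<in>E. scale (c (ush (sh i))) (f (sh i)))"
        using S(2) by (intro sum.cong) (auto simp: E_def I_def fb sh_def ush_def)
      also have "\<dots> = (\<Sum>i\<in>sh ` E. scale (c (ush i)) (f i))"
        by (rule sum.reindex[OF injsh, symmetric, unfolded comp_def])
      finally have s1: "(\<Sum>i\<in>sh ` E. scale (c (ush i)) (f i)) = 0" by simp
      have sub1: "sh ` E \<subseteq> I'" unfolding E_def sh_def I'_def by auto
      have fin1: "finite (sh ` E)" using S(1) unfolding E_def by simp
      have cE0: "\<forall>i\<in>sh ` E. c (ush i) = 0" using H[rule_format, of "sh ` E" "\<lambda>i. c (ush i)"] fin1 sub1 s1 by blast
      have cE: "\<forall>i\<in>E. c i = 0"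
      proof
        fix i assume "i \<in> E"
        then have "c (ush (sh i)) = 0" using cE0 by blast
        moreover have "ush (sh i) = i" unfolding sh_def ush_def by (cases i) simp
        ultimately show "c i = 0" by simp
      qed
      have "(\<Sum>i\<in>S. scale (c i) (f i)) = (\<Sum>i\<in>S - E. scale (c i) (f i))"
        using cE S(1) by (intro sum.mono_neutral_right) (auto simp: module.scale_zero_left[OF M])
      then have s2: "(\<Sum>i\<in>S - E. scale (c i) (f i)) = 0" using s0 by simp
      have sub2: "S - E \<subseteq> I'" using S(2) unfolding E_def I_def I'_def by auto
      have fin2: "finite (S - E)" using S(1) by simp
      have "\<forall>i\<in>S - E. c i = 0" using H[rule_format, of "S - E" c] fin2 sub2 s2 by blast
      then show "\<forall>i\<in>S. c i = 0" using cE by blast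
    qed
  qed
  then show ?thesis
    unfolding family_indep_iff[OF M] f_def[symmetric] I_def[symmetric] I'_def[symmetric] .
qed

end
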